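(* Let $n\ge2$, $h=0$ and $\epsilon\in[-1,1]$. For $0\le p\le 2n$, $$\min_{\sigma\in\mathcal C(p)}H(\sigma)=\begin{cases}n-(p-n)^2-p^2-\epsilon(n-2p) & 0\le p\le n,\\ n-(2n-p)^2-(p-n)^2-\epsilon(2p-3n) & n\le p\le 2n.\end{cases}$$ Moreover, for $0\le p\le n$ this minimum is attained on $C(p,0,0)$ and on $C(0,p,0)$, and for $n\le p\le 2n$ it is attained on $C(n,p-n,p-n)$ and on $C(p-n,n,p-n)$.
   Context: The graph $\mathcal G(2,n)$ has vertex set $V=V^{(1)}\cup V^{(2)}$ with $V^{(1)}=\{1,\dots,n\}$, $V^{(2)}=\{n+1,\dots,2n\}$; its edge set is $E=E_{\mathrm{int}}\cup E_{\mathrm{cross}}$, where $E_{\mathrm{int}}$ consists of all pairs of distinct vertices in the same $V^{(k)}$ and $E_{\mathrm{cross}}=\{\{i,i+n\}:1\le i\le n\}$. For $\sigma\in\{-1,+1\}^V$, $H(\sigma)=-\sum_{\{i,j\}\in E_{\mathrm{int}}}\sigma_i\sigma_j-\epsilon\sum_{\{i,j\}\in E_{\mathrm{cross}}}\sigma_i\sigma_j-h\sum_{i\in V}\sigma_i$. $C(p_1,p_2,a)$ is the set of configurations with exactly $p_1$ vertices of spin $+1$ in $V^{(1)}$, exactly $p_2$ vertices of spin $+1$ in $V^{(2)}$, and exactly $a$ cross-edges both of whose endpoints have spin $+1$. $\mathcal C(p)$ is the set of configurations with exactly $p$ vertices of spin $+1$ in $V$. *)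

theory Defs
  imports Complex_Main
begin

definition V1 :: "nat \<Rightarrow> nat set" where "V1 n = {1..n}"
definition V2 :: "nat \<Rightarrow> nat set" where "V2 n = {n+1..2*n}"
definition V :: "nat \<Rightarrow> nat set" where "V n = V1 n \<union> V2 n"

definition E_int :: "nat \<Rightarrow> nat set set" where
  "E_int n = {{i, j} | i j. i \<noteq> j \<and> ((i \<in> V1 n \<and> j \<in> V1 n) \<or> (i \<in> V2 n \<and> j \<in> V2 n))}"

definition E_cross :: "nat \<Rightarrow> nat set set" where
  "E_cross n = {{i, i + n} | i. i \<in> {1..n}}"

text \<open>Configurations: spin functions V -> {-1,1}, extended by 0 outside V (so that the sets are finite).\<close>
definition configs :: "nat \<Rightarrow> (nat \<Rightarrow> real) set" where
  "configs n = {\<sigma>. (\<forall>i \<in> V n. \<sigma> i = -1 \<or> \<sigma> i = 1) \<and> (\<forall>i. i \<notin> V n \<longrightarrow> \<sigma> i = 0)}"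

definition H :: "nat \<Rightarrow> real \<Rightarrow> real \<Rightarrow> (nat \<Rightarrow> real) \<Rightarrow> real" where
  "H n \<epsilon> h \<sigma> = - (\<Sum>e \<in> E_int n. \<Prod>i \<in> e. \<sigma> i) - \<epsilon> * (\<Sum>e \<in> E_cross n. \<Prod>i \<in> e. \<sigma> i)
      - h * (\<Sum>i \<in> V n. \<sigma> i)"

definition C3 :: "nat \<Rightarrow> nat \<Rightarrow> nat \<Rightarrow> nat \<Rightarrow> (nat \<Rightarrow> real) set" where
  "C3 n p1 p2 a = {\<sigma> \<in> configs n. card {i \<in> V1 n. \<sigma> i = 1} = p1 \<and> card {i \<in> V2 n. \<sigma> i = 1} = p2
      \<and> card {e \<in> E_cross n. \<forall>i \<in> e. \<sigma> i = 1} = a}"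

definition Cp :: "nat \<Rightarrow> nat \<Rightarrow> (nat \<Rightarrow> real) set" where
  "Cp n p = {\<sigma> \<in> configs n. card {i \<in> V n. \<sigma> i = 1} = p}"

end

theory Submission
  imports Defs
begin
definition pairs :: "nat set \<Rightarrow> nat set set" where
  "pairs A = {{i, j} | i j. i \<noteq> j \<and> i \<in> A \<and> j \<in> A}"

lemma pairs_empty: "pairs {} = {}" by (auto simp: pairs_def)

lemma pairs_insert: "x \<notin> B \<Longrightarrow> pairs (insert x B) = pairs B \<union> (\<lambda>j. {x,j}) ` B"
  unfolding pairs_def by auto

lemma pairs_finite: "finite A \<Longrightarrow> finite (pairs A)"
  by (rule finite_subset[of _ "Pow A"]) (auto simp: pairs_def)

lemma pairs_sum:
  fixes f :: "nat \<Rightarrow> real"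
  assumes "finite A"
  shows "2 * (\<Sum>e\<in>pairs A. \<Prod>i\<in>e. f i) = (\<Sum>i\<in>A. f i)^2 - (\<Sum>i\<in>A. (f i)^2)"
  using assms
proof (induction A rule: finite_induct)
  case empty then show ?case by (simp add: pairs_empty)
next
  case (insert x B)
  have disj: "pairs B \<inter> (\<lambda>j. {x,j}) ` B = {}" using insert(2) by (auto simp: pairs_def doubleton_eq_iff)
  have inj: "inj_on (\<lambda>j. {x,j}) B" using insert(2) by (auto simp: inj_on_def doubleton_eq_iff)
  have "(\<Sum>e\<in>(\<lambda>j. {x,j}) ` B. \<Prod>i\<in>e. f i) = (\<Sum>j\<in>B. \<Prod>i\<in>{x,j}. f i)"
    by (simp add: sum.reindex[OF inj])
  also have "\<dots> = (\<Sum>j\<in>B. f x * f j)"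
  proof (rule sum.cong)
    fix j assume "j \<in> B" then have "x \<noteq> j" using insert(2) by auto
    then show "(\<Prod>i\<in>{x,j}. f i) = f x * f j" by simp
  qed simp
  also have "\<dots> = f x * (\<Sum>j\<in>B. f j)" by (simp add: sum_distrib_left)
  finally have e: "(\<Sum>e\<in>(\<lambda>j. {x,j}) ` B. \<Prod>i\<in>e. f i) = f x * (\<Sum>j\<in>B. f j)" .
  have "(\<Sum>e\<in>pairs (insert x B). \<Prod>i\<in>e. f i) = (\<Sum>e\<in>pairs B. \<Prod>i\<in>e. f i) + f x * (\<Sum>j\<in>B. f j)"
    unfolding pairs_insert[OF insert(2)]
    by (subst sum.union_disjoint) (use insert(1) pairs_finite disj e in auto)
  then show ?case using insert by (simp add: power2_eq_square algebra_simps)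
qed

lemma ind_card: "finite A \<Longrightarrow> (\<Sum>i\<in>A. if P i then 1 else 0 :: real) = real (card {i\<in>A. P i})"
  by (simp add: sum.inter_filter[symmetric])

lemma Vdisj: "V1 n \<inter> V2 n = {}" by (auto simp: V1_def V2_def)

lemma Eint_eq: "E_int n = pairs (V1 n) \<union> pairs (V2 n)"
  unfolding E_int_def pairs_def by blast

lemma pairs_disj: "A \<inter> B = {} \<Longrightarrow> pairs A \<inter> pairs B = {}"
  unfolding pairs_def by (auto simp: doubleton_eq_iff)

lemma spin_sum:
  assumes "\<sigma> \<in> configs n" "A \<subseteq> V n" "finite A"
  shows "(\<Sum>i\<in>A. \<sigma> i) = 2 * real (card {i\<in>A. \<sigma> i = 1}) - real (card A)"
    and "(\<Sum>i\<in>A. (\<sigma> i)^2) = real (card A)"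
proof -
  have s: "\<And>i. i \<in> A \<Longrightarrow> \<sigma> i = 2 * (if \<sigma> i = 1 then 1 else 0) - 1"
    using assms(1,2) unfolding configs_def by force
  have "(\<Sum>i\<in>A. \<sigma> i) = (\<Sum>i\<in>A. 2 * (if \<sigma> i = 1 then 1 else 0) - 1)"
    by (rule sum.cong) (use s in auto)
  also have "\<dots> = 2 * real (card {i\<in>A. \<sigma> i = 1}) - real (card A)"
    by (simp add: sum_subtractf sum_distrib_left[symmetric] ind_card assms(3))
  finally show "(\<Sum>i\<in>A. \<sigma> i) = 2 * real (card {i\<in>A. \<sigma> i = 1}) - real (card A)" .
  have "(\<Sum>i\<in>A. (\<sigma> i)^2) = (\<Sum>i\<in>A. 1)"
  proof (rule sum.cong)
    fix i assume "i \<in> A"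
    then have "\<sigma> i = -1 \<or> \<sigma> i = 1" using assms(1,2) by (auto simp: configs_def)
    then show "(\<sigma> i)^2 = 1" by auto
  qed simp
  then show "(\<Sum>i\<in>A. (\<sigma> i)^2) = real (card A)" by simp
qed

lemma cross_inj: "inj_on (\<lambda>i. {i, i + (n::nat)}) S"
proof (rule inj_onI)
  fix x y assume e: "{x, x + n} = {y, y + n}"
  have "x = y \<or> x = y + n" using e by (metis insertI1 insertE singletonD)
  moreover have "y = x \<or> y = x + n" using e by (metis insertI1 insertE singletonD)
  ultimately show "x = y" by auto
qed

lemma Ecross_img: "E_cross n = (\<lambda>i. {i, i + n}) ` {1..n}"
  unfolding E_cross_def by auto

lemma ca_eq: "card {e\<in>E_cross n. \<forall>i\<in>e. \<sigma> i = 1} = card {i\<in>{1..n}. \<sigma> i = 1 \<and> \<sigma> (i+n) = 1}"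
proof -
  have "{e\<in>E_cross n. \<forall>i\<in>e. \<sigma> i = 1} = (\<lambda>i. {i, i + n}) ` {i\<in>{1..n}. \<sigma> i = 1 \<and> \<sigma> (i+n) = 1}"
    unfolding Ecross_img by auto
  then show ?thesis using card_image[OF cross_inj] by simp
qed

lemma c2_eq: "card {i\<in>V2 n. \<sigma> i = 1} = card {i\<in>{1..n}. \<sigma> (i+n) = 1}"
proof -
  have "{i\<in>V2 n. \<sigma> i = 1} = (\<lambda>i. i + n) ` {i\<in>{1..n}. \<sigma> (i+n) = 1}"
  proof (rule set_eqI, rule iffI)
    fix j assume "j \<in> {i\<in>V2 n. \<sigma> i = 1}"
    then have "j - n \<in> {i\<in>{1..n}. \<sigma> (i+n) = 1}" "j = (j - n) + n" by (auto simp: V2_def)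
    then show "j \<in> (\<lambda>i. i + n) ` {i\<in>{1..n}. \<sigma> (i+n) = 1}" by blast
  qed (auto simp: V2_def)
  then show ?thesis by (simp add: card_image inj_on_def)
qed

definition F :: "nat \<Rightarrow> real \<Rightarrow> nat \<Rightarrow> nat \<Rightarrow> nat \<Rightarrow> real" where
  "F n \<epsilon> p1 p2 a = real n - ((2 * real p1 - real n)^2 + (2 * real p2 - real n)^2) / 2
     - \<epsilon> * (real n - 2 * real p1 - 2 * real p2 + 4 * real a)"

abbreviation c1 where "c1 n \<sigma> \<equiv> card {i\<in>V1 n. \<sigma> i = 1}"
abbreviation c2 where "c2 n \<sigma> \<equiv> card {i\<in>V2 n. \<sigma> i = 1}"
abbreviation ca where "ca n \<sigma> \<equiv> card {e\<in>E_cross n. \<forall>i\<in>e. \<sigma> i = (1::real)}"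

lemma cross_sum:
  assumes "\<sigma> \<in> configs n" "n \<ge> 1"
  shows "(\<Sum>e\<in>E_cross n. \<Prod>i\<in>e. \<sigma> i) = 4 * real (ca n \<sigma>) - 2 * real (c1 n \<sigma>) - 2 * real (c2 n \<sigma>) + real n"
proof -
  let ?u = "\<lambda>i. if \<sigma> i = 1 then 1 else (0::real)"
  let ?v = "\<lambda>i. if \<sigma> (i+n) = 1 then 1 else (0::real)"
  let ?w = "\<lambda>i. if \<sigma> i = 1 \<and> \<sigma> (i+n) = 1 then 1 else (0::real)"
  have "(\<Sum>e\<in>E_cross n. \<Prod>i\<in>e. \<sigma> i) = (\<Sum>i\<in>{1..n}. \<Prod>j\<in>{i, i+n}. \<sigma> j)"
    unfolding Ecross_img by (simp add: sum.reindex[OF cross_inj])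
  also have "\<dots> = (\<Sum>i\<in>{1..n}. 4 * ?w i - 2 * ?u i - 2 * ?v i + 1)"
  proof (rule sum.cong)
    fix i assume i: "i \<in> {1..n}"
    then have "i \<in> V n" "i + n \<in> V n" by (auto simp: V_def V1_def V2_def)
    then have "\<sigma> i = -1 \<or> \<sigma> i = 1" "\<sigma> (i+n) = -1 \<or> \<sigma> (i+n) = 1" using assms(1) by (auto simp: configs_def)
    moreover have "i \<noteq> i + n" using assms(2) by simp
    ultimately show "(\<Prod>j\<in>{i, i+n}. \<sigma> j) = 4 * ?w i - 2 * ?u i - 2 * ?v i + 1" by auto
  qed simp
  also have "\<dots> = 4 * (\<Sum>i\<in>{1..n}. ?w i) - 2 * (\<Sum>i\<in>{1..n}. ?u i) - 2 * (\<Sum>i\<in>{1..n}. ?v i) + real n"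
    by (simp add: sum.distrib sum_subtractf sum_distrib_left)
  also have "\<dots> = 4 * real (ca n \<sigma>) - 2 * real (c1 n \<sigma>) - 2 * real (c2 n \<sigma>) + real n"
    by (simp only: ind_card finite_atLeastAtMost ca_eq c2_eq V1_def)
  finally show ?thesis .
qed

lemma Hform:
  assumes "\<sigma> \<in> configs n" "n \<ge> 1"
  shows "H n \<epsilon> 0 \<sigma> = F n \<epsilon> (c1 n \<sigma>) (c2 n \<sigma>) (ca n \<sigma>)"
proof -
  have f1: "finite (V1 n)" "finite (V2 n)" by (auto simp: V1_def V2_def)
  have sub: "V1 n \<subseteq> V n" "V2 n \<subseteq> V n" by (auto simp: V_def)
  have cV: "card (V1 n) = n" "card (V2 n) = n" by (auto simp: V1_def V2_def)
  have "(\<Sum>e\<in>E_int n. \<Prod>i\<in>e. \<sigma> i) = (\<Sum>e\<in>pairs (V1 n). \<Prod>i\<in>e. \<sigma> i) + (\<Sum>e\<in>pairs (V2 n). \<Prod>i\<in>e. \<sigma> i)"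
    unfolding Eint_eq by (rule sum.union_disjoint) (use f1 pairs_finite pairs_disj[OF Vdisj] in auto)
  moreover have "2 * (\<Sum>e\<in>pairs (V1 n). \<Prod>i\<in>e. \<sigma> i) = (2 * real (c1 n \<sigma>) - real n)^2 - real n"
    using pairs_sum[OF f1(1), of \<sigma>] spin_sum[OF assms(1) sub(1) f1(1)] cV by simp
  moreover have "2 * (\<Sum>e\<in>pairs (V2 n). \<Prod>i\<in>e. \<sigma> i) = (2 * real (c2 n \<sigma>) - real n)^2 - real n"
    using pairs_sum[OF f1(2), of \<sigma>] spin_sum[OF assms(1) sub(2) f1(2)] cV by simp
  ultimately show ?thesis unfolding H_def F_def cross_sum[OF assms] by (simp add: field_simps)
qed

lemma constraints:
  shows "c1 n \<sigma> \<le> n" "c2 n \<sigma> \<le> n" "ca n \<sigma> \<le> c1 n \<sigma>" "ca n \<sigma> \<le> c2 n \<sigma>"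
    "c1 n \<sigma> + c2 n \<sigma> \<le> n + ca n \<sigma>"
proof -
  have "c1 n \<sigma> \<le> card (V1 n)" by (rule card_mono) (auto simp: V1_def)
  then show "c1 n \<sigma> \<le> n" by (simp add: V1_def)
  have "c2 n \<sigma> \<le> card (V2 n)" by (rule card_mono) (auto simp: V2_def)
  then show "c2 n \<sigma> \<le> n" by (simp add: V2_def)
  show "ca n \<sigma> \<le> c1 n \<sigma>" unfolding ca_eq
    by (rule card_mono) (auto simp: V1_def)
  show "ca n \<sigma> \<le> c2 n \<sigma>" unfolding ca_eq c2_eq
    by (rule card_mono) auto
  let ?A = "{i\<in>{1..n}. \<sigma> i = 1}" and ?B = "{i\<in>{1..n}. \<sigma> (i+n) = 1}"
  have "card ?A + card ?B = card (?A \<union> ?B) + card (?A \<inter> ?B)" by (rule card_Un_Int) auto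
  moreover have "card (?A \<union> ?B) \<le> n"
  proof -
    have "?A \<union> ?B \<subseteq> {1..n}" by auto
    then have "card (?A \<union> ?B) \<le> card {1..n}" by (intro card_mono) auto
    then show ?thesis by simp
  qed
  moreover have "card (?A \<inter> ?B) = card {i\<in>{1..n}. \<sigma> i = 1 \<and> \<sigma> (i+n) = 1}"
    by (rule arg_cong[where f=card]) auto
  ultimately show "c1 n \<sigma> + c2 n \<sigma> \<le> n + ca n \<sigma>" unfolding ca_eq c2_eq V1_def by linarith
qed

lemma cardV: "card {i\<in>V n. \<sigma> i = 1} = c1 n \<sigma> + c2 n \<sigma>"
proof -
  have "{i\<in>V n. \<sigma> i = 1} = {i\<in>V1 n. \<sigma> i = 1} \<union> {i\<in>V2 n. \<sigma> i = 1}" by (auto simp: V_def)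
  moreover have "{i\<in>V1 n. \<sigma> i = 1} \<inter> {i\<in>V2 n. \<sigma> i = 1} = {}" using Vdisj by auto
  ultimately show ?thesis by (simp add: card_Un_disjoint V1_def V2_def)
qed

lemma key_ineq:
  fixes b x y \<epsilon> :: real
  assumes "0 \<le> b" "b \<le> x" "b \<le> y" "y = 0 \<or> y \<ge> 1" "-1 \<le> \<epsilon>" "\<epsilon> \<le> 1"
  shows "\<epsilon> * b \<le> x * y"
proof -
  have "\<epsilon> * b \<le> b" using mult_right_mono[OF assms(6) assms(1)] by simp
  moreover have "b \<le> x * y"
    using assms(4)
  proof
    assume "y = 0" then show ?thesis using assms(1,3) by simp
  next
    assume "y \<ge> 1" then have "x * 1 \<le> x * y" using assms(1,2) by (intro mult_left_mono) auto
    then show ?thesis using assms(2) by simp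
  qed
  ultimately show ?thesis by linarith
qed

definition T1 :: "nat \<Rightarrow> real \<Rightarrow> real \<Rightarrow> real" where
  "T1 n \<epsilon> x = real n - (x - real n)^2 - x^2 - \<epsilon> * (real n - 2 * x)"
definition T2 :: "nat \<Rightarrow> real \<Rightarrow> real \<Rightarrow> real" where
  "T2 n \<epsilon> x = real n - (2 * real n - x)^2 - (x - real n)^2 - \<epsilon> * (2 * x - 3 * real n)"

lemma Fid1: "F n \<epsilon> p1 p2 a - T1 n \<epsilon> (real p1 + real p2) = 4 * real p1 * real p2 - 4 * \<epsilon> * real a"
  unfolding F_def T1_def power2_eq_square by algebra

lemma Fid2: "F n \<epsilon> p1 p2 a - T2 n \<epsilon> (real p1 + real p2) =
   4 * (real n - real p1) * (real n - real p2) - 4 * \<epsilon> * (real n + real a - real p1 - real p2)"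
  unfolding F_def T2_def power2_eq_square by algebra

lemma F_ge1:
  assumes "a \<le> p1" "a \<le> p2" "-1 \<le> \<epsilon>" "\<epsilon> \<le> 1"
  shows "T1 n \<epsilon> (real p1 + real p2) \<le> F n \<epsilon> p1 p2 a"
proof -
  have "\<epsilon> * real a \<le> real p1 * real p2"
    by (rule key_ineq) (use assms in auto)
  then show ?thesis using Fid1[of n \<epsilon> p1 p2 a] by linarith
qed

lemma F_ge2:
  assumes "a \<le> p1" "a \<le> p2" "p1 \<le> n" "p2 \<le> n" "p1 + p2 \<le> n + a" "-1 \<le> \<epsilon>" "\<epsilon> \<le> 1"
  shows "T2 n \<epsilon> (real p1 + real p2) \<le> F n \<epsilon> p1 p2 a"
proof -
  have "\<epsilon> * (real n + real a - real p1 - real p2) \<le> (real n - real p1) * (real n - real p2)"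
  proof (rule key_ineq)
    show "real n - real p2 = 0 \<or> 1 \<le> real n - real p2"
    proof (cases "p2 = n")
      case False
      then have "p2 + 1 \<le> n" using assms(4) by auto
      then have "real (p2 + 1) \<le> real n" by (simp only: of_nat_le_iff)
      then show ?thesis by simp
    qed simp
  qed (use assms in auto)
  then show ?thesis using Fid2[of n \<epsilon> p1 p2 a] by linarith
qed

definition wit :: "nat \<Rightarrow> nat set \<Rightarrow> nat \<Rightarrow> real" where
  "wit n S i = (if i \<in> V n then (if i \<in> S then 1 else -1) else 0)"

lemma wit_configs: "wit n S \<in> configs n" by (auto simp: wit_def configs_def)

lemma wit_c1: "c1 n (wit n S) = card (V1 n \<inter> S)"
proof -
  have "{i\<in>V1 n. wit n S i = 1} = V1 n \<inter> S" by (auto simp: wit_def V_def)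
  then show ?thesis by simp
qed
lemma wit_c2: "c2 n (wit n S) = card (V2 n \<inter> S)"
proof -
  have "{i\<in>V2 n. wit n S i = 1} = V2 n \<inter> S" by (auto simp: wit_def V_def)
  then show ?thesis by simp
qed
lemma wit_ca: "ca n (wit n S) = card {i\<in>{1..n}. i \<in> S \<and> i + n \<in> S}"
proof -
  have "{i\<in>{1..n}. wit n S i = 1 \<and> wit n S (i+n) = 1} = {i\<in>{1..n}. i \<in> S \<and> i + n \<in> S}"
    by (auto simp: wit_def V_def V1_def V2_def)
  then show ?thesis by (simp add: ca_eq)
qed

lemma C3_H:
  assumes "\<sigma> \<in> C3 n p1 p2 a" "n \<ge> 1"
  shows "H n \<epsilon> 0 \<sigma> = F n \<epsilon> p1 p2 a" "\<sigma> \<in> Cp n (p1 + p2)"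
  using assms Hform[of \<sigma> n \<epsilon>] cardV[of n \<sigma>] by (auto simp: C3_def Cp_def)

lemma wit_C3:
  assumes "card (V1 n \<inter> S) = p1" "card (V2 n \<inter> S) = p2" "card {i\<in>{1..n}. i \<in> S \<and> i + n \<in> S} = a"
  shows "wit n S \<in> C3 n p1 p2 a"
  using assms wit_configs wit_c1 wit_c2 wit_ca unfolding C3_def by auto

lemma finite_img: "n \<ge> 1 \<Longrightarrow> finite (H n \<epsilon> 0 ` Cp n p)"
proof -
  assume n: "n \<ge> 1"
  have "H n \<epsilon> 0 ` Cp n p \<subseteq> (\<lambda>(x,y,z). F n \<epsilon> x y z) ` ({0..n} \<times> {0..n} \<times> {0..n})"
  proof
    fix v assume "v \<in> H n \<epsilon> 0 ` Cp n p"
    then obtain \<sigma> where s: "\<sigma> \<in> configs n" "v = H n \<epsilon> 0 \<sigma>" by (auto simp: Cp_def)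
    then have "v = F n \<epsilon> (c1 n \<sigma>) (c2 n \<sigma>) (ca n \<sigma>)" using Hform[OF s(1) n] by simp
    moreover have "(c1 n \<sigma>, c2 n \<sigma>, ca n \<sigma>) \<in> {0..n} \<times> {0..n} \<times> {0..n}"
      using constraints[of n \<sigma>] by auto
    ultimately show "v \<in> (\<lambda>(x,y,z). F n \<epsilon> x y z) ` ({0..n} \<times> {0..n} \<times> {0..n})" by force
  qed
  then show ?thesis by (rule finite_subset) auto
qed

lemma min_lemma:
  assumes n: "n \<ge> 1" and w: "w \<in> C3 n p1 p2 a" and val: "F n \<epsilon> p1 p2 a = t"
    and ge: "\<And>q1 q2 b. q1 + q2 = p1 + p2 \<Longrightarrow> b \<le> q1 \<Longrightarrow> b \<le> q2 \<Longrightarrow> q1 \<le> n \<Longrightarrow> q2 \<le> n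
       \<Longrightarrow> q1 + q2 \<le> n + b \<Longrightarrow> t \<le> F n \<epsilon> q1 q2 b"
  shows "Min (H n \<epsilon> 0 ` Cp n (p1 + p2)) = t"
proof (rule Min_eqI[OF finite_img[OF n]])
  have "H n \<epsilon> 0 w = t" using C3_H(1)[OF w n] val by simp
  then show "t \<in> H n \<epsilon> 0 ` Cp n (p1 + p2)" using C3_H(2)[OF w n] by (metis image_eqI)
next
  fix y assume "y \<in> H n \<epsilon> 0 ` Cp n (p1 + p2)"
  then obtain \<sigma> where s: "\<sigma> \<in> configs n" "card {i\<in>V n. \<sigma> i = 1} = p1 + p2" "y = H n \<epsilon> 0 \<sigma>"
    by (auto simp: Cp_def)
  show "t \<le> y" unfolding s(3) Hform[OF s(1) n]
    by (rule ge) (use constraints[of n \<sigma>] s(2) cardV[of n \<sigma>] in auto)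
qed

theorem proposition4p4:
  fixes n p :: nat and \<epsilon> h :: real
  assumes "n \<ge> 2" and "h = 0" and "-1 \<le> \<epsilon>" and "\<epsilon> \<le> 1" and "p \<le> 2 * n"
  shows "(p \<le> n \<longrightarrow>
            Min (H n \<epsilon> h ` Cp n p) = real n - (real p - real n)^2 - (real p)^2 - \<epsilon> * (real n - 2 * real p)
          \<and> C3 n p 0 0 \<noteq> {} \<and> C3 n 0 p 0 \<noteq> {}
          \<and> (\<forall>\<sigma> \<in> C3 n p 0 0 \<union> C3 n 0 p 0. H n \<epsilon> h \<sigma> = Min (H n \<epsilon> h ` Cp n p)))
       \<and> (n \<le> p \<longrightarrow>
            Min (H n \<epsilon> h ` Cp n p) = real n - (2 * real n - real p)^2 - (real p - real n)^2 - \<epsilon> * (2 * real p - 3 * real n)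
          \<and> C3 n n (p - n) (p - n) \<noteq> {} \<and> C3 n (p - n) n (p - n) \<noteq> {}
          \<and> (\<forall>\<sigma> \<in> C3 n n (p - n) (p - n) \<union> C3 n (p - n) n (p - n). H n \<epsilon> h \<sigma> = Min (H n \<epsilon> h ` Cp n p)))"
proof (intro conjI impI)
  have n: "n \<ge> 1" using assms(1) by simp
  note h = assms(2)
  {
    assume pn: "p \<le> n"
    have vA: "F n \<epsilon> p 0 0 = T1 n \<epsilon> (real p)" using Fid1[of n \<epsilon> p 0 0] by simp
    have vB: "F n \<epsilon> 0 p 0 = T1 n \<epsilon> (real p)" using Fid1[of n \<epsilon> 0 p 0] by simp
    have wA: "wit n {1..p} \<in> C3 n p 0 0"
    proof (rule wit_C3)
      have "V1 n \<inter> {1..p} = {1..p}" using pn by (auto simp: V1_def)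
      then show "card (V1 n \<inter> {1..p}) = p" by simp
      have "V2 n \<inter> {1..p} = {}" using pn by (auto simp: V2_def)
      then show "card (V2 n \<inter> {1..p}) = 0" by simp
      have "{i\<in>{1..n}. i \<in> {1..p} \<and> i + n \<in> {1..p}} = {}" using pn by auto
      then show "card {i\<in>{1..n}. i \<in> {1..p} \<and> i + n \<in> {1..p}} = 0" by simp
    qed
    have wB: "wit n {n+1..n+p} \<in> C3 n 0 p 0"
    proof (rule wit_C3)
      have "V1 n \<inter> {n+1..n+p} = {}" by (auto simp: V1_def)
      then show "card (V1 n \<inter> {n+1..n+p}) = 0" by simp
      have "V2 n \<inter> {n+1..n+p} = {n+1..n+p}" using pn by (auto simp: V2_def)
      then show "card (V2 n \<inter> {n+1..n+p}) = p" by simp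
      have "{i\<in>{1..n}. i \<in> {n+1..n+p} \<and> i + n \<in> {n+1..n+p}} = {}" by auto
      then show "card {i\<in>{1..n}. i \<in> {n+1..n+p} \<and> i + n \<in> {n+1..n+p}} = 0" by simp
    qed
    have "Min (H n \<epsilon> 0 ` Cp n (p + 0)) = T1 n \<epsilon> (real p)"
    proof (rule min_lemma[OF n wA vA])
      fix q1 q2 b assume q: "q1 + q2 = p + 0" "b \<le> q1" "b \<le> q2"
      have "real q1 + real q2 = real p" using q(1) by (metis add_0_right of_nat_add)
      then show "T1 n \<epsilon> (real p) \<le> F n \<epsilon> q1 q2 b" using F_ge1[OF q(2,3) assms(3,4), of n] by simp
    qed
    then have M: "Min (H n \<epsilon> h ` Cp n p) = T1 n \<epsilon> (real p)" unfolding h by simp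
    then show "Min (H n \<epsilon> h ` Cp n p) = real n - (real p - real n)^2 - (real p)^2 - \<epsilon> * (real n - 2 * real p)"
      by (simp add: T1_def)
    show "C3 n p 0 0 \<noteq> {}" using wA by auto
    show "C3 n 0 p 0 \<noteq> {}" using wB by auto
    show "\<forall>\<sigma> \<in> C3 n p 0 0 \<union> C3 n 0 p 0. H n \<epsilon> h \<sigma> = Min (H n \<epsilon> h ` Cp n p)"
      using C3_H(1)[OF _ n] vA vB M h by auto
  }
  {
    assume pn: "n \<le> p"
    have vA: "F n \<epsilon> n (p - n) (p - n) = T2 n \<epsilon> (real p)" using Fid2[of n \<epsilon> n "p - n" "p - n"] pn by simp
    have vB: "F n \<epsilon> (p - n) n (p - n) = T2 n \<epsilon> (real p)" using Fid2[of n \<epsilon> "p - n" n "p - n"] pn by simp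
    have wA: "wit n {1..p} \<in> C3 n n (p - n) (p - n)"
    proof (rule wit_C3)
      have "V1 n \<inter> {1..p} = {1..n}" using pn by (auto simp: V1_def)
      then show "card (V1 n \<inter> {1..p}) = n" by simp
      have "V2 n \<inter> {1..p} = {n+1..p}" using pn assms(5) by (auto simp: V2_def)
      then show "card (V2 n \<inter> {1..p}) = p - n" by simp
      have "{i\<in>{1..n}. i \<in> {1..p} \<and> i + n \<in> {1..p}} = {1..p-n}" using pn assms(5) by auto
      then show "card {i\<in>{1..n}. i \<in> {1..p} \<and> i + n \<in> {1..p}} = p - n" by simp
    qed
    have wB: "wit n ({1..p-n} \<union> {n+1..2*n}) \<in> C3 n (p - n) n (p - n)"
    proof (rule wit_C3)
      have "V1 n \<inter> ({1..p-n} \<union> {n+1..2*n}) = {1..p-n}" using pn assms(5) by (auto simp: V1_def)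
      then show "card (V1 n \<inter> ({1..p-n} \<union> {n+1..2*n})) = p - n" by simp
      have "V2 n \<inter> ({1..p-n} \<union> {n+1..2*n}) = {n+1..2*n}" using pn assms(5) by (auto simp: V2_def)
      then show "card (V2 n \<inter> ({1..p-n} \<union> {n+1..2*n})) = n" by simp
      have "{i\<in>{1..n}. i \<in> ({1..p-n} \<union> {n+1..2*n}) \<and> i + n \<in> ({1..p-n} \<union> {n+1..2*n})} = {1..p-n}"
        using pn assms(5) by auto
      then show "card {i\<in>{1..n}. i \<in> ({1..p-n} \<union> {n+1..2*n}) \<and> i + n \<in> ({1..p-n} \<union> {n+1..2*n})} = p - n"
        by simp
    qed
    have pp: "n + (p - n) = p" using pn by simp
    have "Min (H n \<epsilon> 0 ` Cp n (n + (p - n))) = T2 n \<epsilon> (real p)"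
    proof (rule min_lemma[OF n wA vA])
      fix q1 q2 b assume q: "q1 + q2 = n + (p - n)" "b \<le> q1" "b \<le> q2" "q1 \<le> n" "q2 \<le> n" "q1 + q2 \<le> n + b"
      have "real q1 + real q2 = real p" using q(1) pp by (metis of_nat_add)
      then show "T2 n \<epsilon> (real p) \<le> F n \<epsilon> q1 q2 b" using F_ge2[OF q(2-6) assms(3,4)] by simp
    qed
    then have M: "Min (H n \<epsilon> h ` Cp n p) = T2 n \<epsilon> (real p)" unfolding h pp by simp
    then show "Min (H n \<epsilon> h ` Cp n p) = real n - (2 * real n - real p)^2 - (real p - real n)^2 - \<epsilon> * (2 * real p - 3 * real n)"
      by (simp add: T2_def)
    show "C3 n n (p - n) (p - n) \<noteq> {}" using wA by auto
    show "C3 n (p - n) n (p - n) \<noteq> {}" using wB by auto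
    show "\<forall>\<sigma> \<in> C3 n n (p - n) (p - n) \<union> C3 n (p - n) n (p - n). H n \<epsilon> h \<sigma> = Min (H n \<epsilon> h ` Cp n p)"
      using C3_H(1)[OF _ n] vA vB M h by auto
  }
qed

end
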